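(* Let $R$ be an axis-aligned rectangle containing $O(n)$ sites in its interior, with $O(n)$ ports on its top side and right side. Let $W$ be the set of intersection points of the horizontal and vertical lines through the sites and ports. For $w\in W$, a candidate rectangle with bottom-left corner $w$ is an axis-aligned rectangle with bottom-left corner $w$ containing no site in its interior such that either (i) its right side passes through a site $s$ with $s_x>w_x$, $s_y>w_y$ and its top side lies on the horizontal line through a site lying above $s$, or (ii) symmetrically, its top side passes through a site $s$ with $s_x>w_x$, $s_y>w_y$ and its right side lies on the vertical line through a site lying to the right of $s$. Then the total number of distinct candidate rectangles over all $w\in W$ is $O(n^3)$.
   Context: For a point $p$, $p_x$ and $p_y$ denote its $x$- and $y$-coordinates. *)

theory Defs
  imports Main Complex_Main
begin

type_synonym point = "real \<times> real"

definition open_rect :: "point \<Rightarrow> point \<Rightarrow> point set" where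
  "open_rect a b = {p. fst a < fst p \<and> fst p < fst b \<and> snd a < snd p \<and> snd p < snd b}"

definition top_side :: "point \<Rightarrow> point \<Rightarrow> point set" where
  "top_side a b = {p. fst a \<le> fst p \<and> fst p \<le> fst b \<and> snd p = snd b}"

definition right_side :: "point \<Rightarrow> point \<Rightarrow> point set" where
  "right_side a b = {p. fst p = fst b \<and> snd a \<le> snd p \<and> snd p \<le> snd b}"

definition grid_pts :: "point set \<Rightarrow> point set \<Rightarrow> point set" where
  "grid_pts S P = {w. fst w \<in> fst ` (S \<union> P) \<and> snd w \<in> snd ` (S \<union> P)}"

definition candidate :: "point set \<Rightarrow> point \<Rightarrow> point \<Rightarrow> bool" where
  "candidate S w b \<longleftrightarrow>
     fst w < fst b \<and> snd w < snd b \<and> S \<inter> open_rect w b = {} \<and>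
     ((\<exists>s\<in>S. \<exists>t\<in>S. fst s > fst w \<and> snd s > snd w \<and>
          s \<in> right_side w b \<and> snd t > snd s \<and> snd b = snd t) \<or>
      (\<exists>s\<in>S. \<exists>t\<in>S. fst s > fst w \<and> snd s > snd w \<and>
          s \<in> top_side w b \<and> fst t > fst s \<and> fst b = fst t))"

definition candidates :: "point set \<Rightarrow> point set \<Rightarrow> (point \<times> point) set" where
  "candidates S P = {(w, b). w \<in> grid_pts S P \<and> candidate S w b}"

end

theory Submission
  imports Defs
begin

definition candA :: "point set \<Rightarrow> point \<Rightarrow> point set" where
  "candA S w = {b. S \<inter> open_rect w b = {} \<and> (\<exists>s\<in>S. \<exists>t\<in>S. fst s > fst w \<and> snd s > snd w \<and>
          s \<in> right_side w b \<and> snd t > snd s \<and> snd b = snd t)}"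

definition candB :: "point set \<Rightarrow> point \<Rightarrow> point set" where
  "candB S w = {b. S \<inter> open_rect w b = {} \<and> (\<exists>s\<in>S. \<exists>t\<in>S. fst s > fst w \<and> snd s > snd w \<and>
          s \<in> top_side w b \<and> fst t > fst s \<and> fst b = fst t)}"

lemma candA_aux:
  assumes "b \<in> candA S w" "b' \<in> candA S w" "fst b < fst b'"
  shows "snd b \<noteq> snd b'"
proof
  assume e: "snd b = snd b'"
  from assms(1) obtain s t where st: "s \<in> S" "t \<in> S" "fst s > fst w" "snd s > snd w"
    "s \<in> right_side w b" "snd t > snd s" "snd b = snd t"
    unfolding candA_def by blast
  have "s \<in> open_rect w b'" using st e assms(3) unfolding open_rect_def right_side_def by auto
  moreover have "S \<inter> open_rect w b' = {}" using assms(2) unfolding candA_def by blast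
  ultimately show False using st(1) by blast
qed

lemma candB_aux:
  assumes "b \<in> candB S w" "b' \<in> candB S w" "snd b < snd b'"
  shows "fst b \<noteq> fst b'"
proof
  assume e: "fst b = fst b'"
  from assms(1) obtain s t where st: "s \<in> S" "t \<in> S" "fst s > fst w" "snd s > snd w"
    "s \<in> top_side w b" "fst t > fst s" "fst b = fst t"
    unfolding candB_def by blast
  have "s \<in> open_rect w b'" using st e assms(3) unfolding open_rect_def top_side_def by auto
  moreover have "S \<inter> open_rect w b' = {}" using assms(2) unfolding candB_def by blast
  ultimately show False using st(1) by blast
qed

lemma candA_inj: "inj_on snd (candA S w)"
proof (rule inj_onI)
  fix x y assume xy: "x \<in> candA S w" "y \<in> candA S w" "snd x = snd y"
  have "fst x = fst y"
  proof (rule ccontr)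
    assume "fst x \<noteq> fst y"
    then consider "fst x < fst y" | "fst y < fst x" by linarith
    then show False using candA_aux[OF xy(1,2)] candA_aux[OF xy(2,1)] xy(3) by metis
  qed
  then show "x = y" using xy(3) by (simp add: prod_eq_iff)
qed

lemma candB_inj: "inj_on fst (candB S w)"
proof (rule inj_onI)
  fix x y assume xy: "x \<in> candB S w" "y \<in> candB S w" "fst x = fst y"
  have "snd x = snd y"
  proof (rule ccontr)
    assume "snd x \<noteq> snd y"
    then consider "snd x < snd y" | "snd y < snd x" by linarith
    then show False using candB_aux[OF xy(1,2)] candB_aux[OF xy(2,1)] xy(3) by metis
  qed
  then show "x = y" using xy(3) by (simp add: prod_eq_iff)
qed

lemma candA_img: "snd ` candA S w \<subseteq> snd ` S"
  unfolding candA_def by auto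

lemma candB_img: "fst ` candB S w \<subseteq> fst ` S"
  unfolding candB_def by auto

lemma candA_fin: assumes "finite S" shows "finite (candA S w)" "card (candA S w) \<le> card S"
proof -
  have f: "finite (snd ` candA S w)" using candA_img assms finite_subset by blast
  show "finite (candA S w)" using finite_imageD[OF f candA_inj] .
  have "card (candA S w) = card (snd ` candA S w)" using card_image[OF candA_inj] by simp
  also have "\<dots> \<le> card (snd ` S)" using card_mono[OF _ candA_img] assms by simp
  also have "\<dots> \<le> card S" using card_image_le assms by blast
  finally show "card (candA S w) \<le> card S" .
qed

lemma candB_fin: assumes "finite S" shows "finite (candB S w)" "card (candB S w) \<le> card S"
proof -
  have f: "finite (fst ` candB S w)" using candB_img assms finite_subset by blast
  show "finite (candB S w)" using finite_imageD[OF f candB_inj] .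
  have "card (candB S w) = card (fst ` candB S w)" using card_image[OF candB_inj] by simp
  also have "\<dots> \<le> card (fst ` S)" using card_mono[OF _ candB_img] assms by simp
  also have "\<dots> \<le> card S" using card_image_le assms by blast
  finally show "card (candB S w) \<le> card S" .
qed

lemma cand_sub: "{b. candidate S w b} \<subseteq> candA S w \<union> candB S w"
  unfolding candidate_def candA_def candB_def by blast

lemma cand_fin: assumes "finite S"
  shows "finite {b. candidate S w b}" "card {b. candidate S w b} \<le> 2 * card S"
proof -
  have f: "finite (candA S w \<union> candB S w)" using candA_fin candB_fin assms by blast
  show "finite {b. candidate S w b}" using finite_subset[OF cand_sub f] .
  have "card {b. candidate S w b} \<le> card (candA S w \<union> candB S w)"
    using card_mono[OF f cand_sub] .
  also have "\<dots> \<le> card (candA S w) + card (candB S w)" by (rule card_Un_le)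
  also have "\<dots> \<le> 2 * card S" using candA_fin(2)[OF assms, of w] candB_fin(2)[OF assms, of w] by linarith
  finally show "card {b. candidate S w b} \<le> 2 * card S" .
qed

lemma grid_fin: assumes "finite S" "finite P" "card S \<le> n" "card P \<le> n"
  shows "finite (grid_pts S P)" "card (grid_pts S P) \<le> (2*n)^2"
proof -
  have g: "grid_pts S P = fst ` (S \<union> P) \<times> snd ` (S \<union> P)"
    unfolding grid_pts_def by (simp add: set_eq_iff mem_Times_iff)
  have u: "card (S \<union> P) \<le> 2 * n" using card_Un_le[of S P] assms by linarith
  have c1: "card (fst ` (S \<union> P)) \<le> 2*n" using card_image_le[of "S \<union> P" fst] assms u by simp
  have c2: "card (snd ` (S \<union> P)) \<le> 2*n" using card_image_le[of "S \<union> P" snd] assms u by simp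
  show "finite (grid_pts S P)" using g assms by simp
  have "card (grid_pts S P) = card (fst ` (S \<union> P)) * card (snd ` (S \<union> P))"
    using g card_cartesian_product by simp
  also have "\<dots> \<le> (2*n) * (2*n)" using c1 c2 mult_le_mono by blast
  finally show "card (grid_pts S P) \<le> (2*n)^2" by (simp add: power2_eq_square)
qed

theorem lemma4:
  "\<exists>C::real. \<forall>(n::nat) (S::point set) (P::point set) (a::point) (b::point).
     finite S \<and> finite P \<and> card S \<le> n \<and> card P \<le> n \<and>
     fst a < fst b \<and> snd a < snd b \<and>
     S \<subseteq> open_rect a b \<and> P \<subseteq> top_side a b \<union> right_side a b \<longrightarrow>
     finite (candidates S P) \<and> real (card (candidates S P)) \<le> C * real n ^ 3"
proof (rule exI[of _ 8], intro allI impI)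
  fix n :: nat and S P :: "point set" and a b :: point
  assume h: "finite S \<and> finite P \<and> card S \<le> n \<and> card P \<le> n \<and>
     fst a < fst b \<and> snd a < snd b \<and>
     S \<subseteq> open_rect a b \<and> P \<subseteq> top_side a b \<union> right_side a b"
  have fS: "finite S" and fP: "finite P" and cS: "card S \<le> n" and cP: "card P \<le> n" using h by auto
  have eq: "candidates S P = Sigma (grid_pts S P) (\<lambda>w. {b. candidate S w b})"
    unfolding candidates_def by auto
  have fin: "finite (candidates S P)" unfolding eq
    using grid_fin[OF fS fP cS cP] cand_fin[OF fS] by blast
  have "card (candidates S P) = (\<Sum>w\<in>grid_pts S P. card {b. candidate S w b})"
    unfolding eq by (rule card_SigmaI) (use grid_fin[OF fS fP cS cP] cand_fin[OF fS] in auto)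
  also have "\<dots> \<le> (\<Sum>w\<in>grid_pts S P. 2 * n)"
    by (rule sum_mono, rule order_trans[OF cand_fin(2)[OF fS]]) (use cS in simp)
  also have "\<dots> = card (grid_pts S P) * (2 * n)" by simp
  also have "\<dots> \<le> (2*n)^2 * (2*n)" using grid_fin[OF fS fP cS cP] mult_le_mono1 by blast
  also have "\<dots> = 8 * n^3" by (simp add: power2_eq_square power3_eq_cube)
  finally have "card (candidates S P) \<le> 8 * n ^ 3" .
  then have "real (card (candidates S P)) \<le> real (8 * n ^ 3)" by (simp only: of_nat_le_iff)
  then have "real (card (candidates S P)) \<le> 8 * real n ^ 3" by simp
  then show "finite (candidates S P) \<and> real (card (candidates S P)) \<le> 8 * real n ^ 3" by (rule conjI[OF fin])
qed

end
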